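(* Let $a>0$ and let $f:[0,\infty)\to[0,\infty)$ be defined by $f(x)=7x$ for $0\le x\le a$, $f(x)=8a-x$ for $a\le x\le 8a$, and $f(x)=0$ for $x\ge 8a$. Consider the problem of choosing a (possibly infinite) subset $U\subseteq(0,8a)$ maximizing $\sum_{x\in U}f(x)$ subject to the constraint that for all $x,y\in U$, $x<y$ implies $2x\le y$. Then the supremum (optimal value) of this problem is exactly $24a$ (and it is attained, e.g. by $U=\{4a/2^i : i\in\mathbb{N}\cup\{0\}\}$). *)

theory Defs
  imports "HOL-Analysis.Analysis"
begin

text \<open>The piecewise-linear function f on [0,\<infinity>) with parameter a.
  (Its values for x < 0 are irrelevant since admissible sets lie in (0,8a).)\<close>
definition f_tent :: "real \<Rightarrow> real \<Rightarrow> real" where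
  "f_tent a x = (if x \<le> a then 7 * x else if x \<le> 8 * a then 8 * a - x else 0)"

definition admissible :: "real \<Rightarrow> real set \<Rightarrow> bool" where
  "admissible a U \<longleftrightarrow> U \<subseteq> {0<..<8 * a} \<and> (\<forall>x\<in>U. \<forall>y\<in>U. x < y \<longrightarrow> 2 * x \<le> y)"

text \<open>Objective: the (possibly infinite) sum of f over U, taken in ennreal so that
  every family of nonnegative terms has a well-defined sum (possibly \<infinity>).\<close>
definition objective :: "real \<Rightarrow> real set \<Rightarrow> ennreal" where
  "objective a U = (\<Sum>\<^sub>\<infinity>x\<in>U. ennreal (f_tent a x))"

end

theory Submission
  imports Defs
begin

definition phi :: "real \<Rightarrow> real \<Rightarrow> real" where
  "phi a t = (if t \<le> a then 14 * t else if t \<le> 2*a then 8*a + 6*t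
              else if t \<le> 4*a then 16*a + 2*t else 24*a)"

lemma phi_step: "a > 0 \<Longrightarrow> m > 0 \<Longrightarrow> f_tent a m + phi a (m/2) \<le> phi a m"
  unfolding phi_def f_tent_def by (auto split: if_splits)

lemma phi_mono: "a > 0 \<Longrightarrow> s \<le> t \<Longrightarrow> phi a s \<le> phi a t"
  unfolding phi_def by (auto split: if_splits)

lemma phi_nonneg: "a > 0 \<Longrightarrow> t \<ge> 0 \<Longrightarrow> phi a t \<ge> 0"
  unfolding phi_def by (auto split: if_splits)

lemma phi_le: "a > 0 \<Longrightarrow> phi a t \<le> 24 * a"
  unfolding phi_def by (auto split: if_splits)

lemma f_nonneg: "a > 0 \<Longrightarrow> x > 0 \<Longrightarrow> f_tent a x \<ge> 0"
  unfolding f_tent_def by auto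

lemma finite_bound:
  assumes a: "a > 0"
  shows "finite F \<Longrightarrow> (\<forall>x\<in>F. 0 < x \<and> x \<le> t) \<Longrightarrow> t \<ge> 0 \<Longrightarrow>
    (\<forall>x\<in>F. \<forall>y\<in>F. x < y \<longrightarrow> 2 * x \<le> y) \<Longrightarrow> sum (f_tent a) F \<le> phi a t"
proof (induction "card F" arbitrary: F t rule: less_induct)
  case less
  show ?case
  proof (cases "F = {}")
    case True
    then show ?thesis using phi_nonneg[OF a less.prems(3)] by simp
  next
    case False
    define m where "m = Max F"
    have mF: "m \<in> F" using False less.prems(1) m_def by simp
    have mt: "0 < m" "m \<le> t" using mF less.prems(2) by auto
    define F' where "F' = F - {m}"
    have cF: "card F' < card F" using mF less.prems(1) F'_def
      by (metis card_Diff1_less)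
    have F'b: "\<forall>x\<in>F'. 0 < x \<and> x \<le> m/2"
    proof
      fix x assume x: "x \<in> F'"
      hence "x \<in> F" "x \<noteq> m" using F'_def by auto
      hence "x < m" using m_def less.prems(1) by (simp add: order.not_eq_order_implies_strict)
      hence "2 * x \<le> m" using less.prems(4) \<open>x \<in> F\<close> mF by blast
      thus "0 < x \<and> x \<le> m/2" using \<open>x \<in> F\<close> less.prems(2) by auto
    qed
    have IH: "sum (f_tent a) F' \<le> phi a (m/2)"
      using less.hyps[OF cF, of "m/2"] F'b mt less.prems(1,4) F'_def by auto
    have "sum (f_tent a) F = f_tent a m + sum (f_tent a) F'"
      using mF less.prems(1) F'_def by (simp add: sum.remove)
    also have "\<dots> \<le> f_tent a m + phi a (m/2)" using IH by simp
    also have "\<dots> \<le> phi a m" using phi_step[OF a mt(1)] .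
    also have "\<dots> \<le> phi a t" using phi_mono[OF a mt(2)] .
    finally show ?thesis .
  qed
qed

lemma objective_le:
  assumes a: "a > 0" and U: "admissible a U"
  shows "objective a U \<le> ennreal (24 * a)"
  unfolding objective_def
proof (rule infsum_le_finite_sums)
  show "(\<lambda>x. ennreal (f_tent a x)) summable_on U" by (intro nonneg_summable_on_complete) simp
next
  fix F assume F: "finite F" "F \<subseteq> U"
  have adm: "F \<subseteq> {0<..<8*a}" "\<forall>x\<in>F. \<forall>y\<in>F. x < y \<longrightarrow> 2 * x \<le> y"
    using U F unfolding admissible_def by blast+
  have "sum (f_tent a) F \<le> phi a (8*a)"
  proof (rule finite_bound[OF a F(1)])
    show "\<forall>x\<in>F. 0 < x \<and> x \<le> 8 * a" using adm(1) by fastforce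
  qed (use adm a in auto)
  also have "\<dots> \<le> 24 * a" using phi_le[OF a] .
  finally have le: "sum (f_tent a) F \<le> 24 * a" .
  have "(\<Sum>x\<in>F. ennreal (f_tent a x)) = ennreal (sum (f_tent a) F)"
    using adm(1) f_nonneg[OF a] by (intro sum_ennreal) auto
  also have "\<dots> \<le> ennreal (24 * a)" using le by (rule ennreal_leI)
  finally show "(\<Sum>x\<in>F. ennreal (f_tent a x)) \<le> ennreal (24 * a)" .
qed

theorem mainTheorem9:
  fixes a :: real
  assumes "a > 0"
  shows "(SUP U \<in> {U. admissible a U}. objective a U) = ennreal (24 * a)
         \<and> admissible a (range (\<lambda>i::nat. 4 * a / 2 ^ i))
         \<and> objective a (range (\<lambda>i::nat. 4 * a / 2 ^ i)) = ennreal (24 * a)"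
proof -
  define h where "h = (\<lambda>i::nat. 4 * a / 2 ^ i)"
  have adm: "admissible a (range h)"
    unfolding admissible_def
  proof (intro conjI ballI impI)
    show "range h \<subseteq> {0<..<8 * a}"
    proof
      fix x assume "x \<in> range h"
      then obtain i where x: "x = 4 * a / 2 ^ i" unfolding h_def by auto
      have "(2::real) ^ i \<ge> 1" by simp
      hence "4 * a / 2 ^ i \<le> 4 * a" using assms by (simp add: divide_le_eq)
      thus "x \<in> {0<..<8*a}" using x assms by auto
    qed
  next
    fix x y assume "x \<in> range h" "y \<in> range h" "x < y"
    then obtain i j where x: "x = 4 * a / 2 ^ i" and y: "y = 4 * a / 2 ^ j" unfolding h_def by auto
    have "j < i"
    proof (rule ccontr)
      assume "\<not> j < i"
      hence "(2::real) ^ i \<le> 2 ^ j" by simp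
      hence "4 * a / 2 ^ j \<le> 4 * a / 2 ^ i" using assms
        by (intro divide_left_mono) auto
      thus False using \<open>x < y\<close> x y by simp
    qed
    hence "(2::real) ^ Suc j \<le> 2 ^ i" by (intro power_increasing) auto
    hence "4 * a / 2 ^ i \<le> 4 * a / 2 ^ Suc j" using assms
      by (intro divide_left_mono) auto
    thus "2 * x \<le> y" using x y by simp
  qed
  define g where "g = (\<lambda>i. f_tent a (h i))"
  have inj: "inj h" unfolding h_def inj_def using assms by (auto simp: divide_cancel_left)
  have gnn: "\<And>i. g i \<ge> 0"
    unfolding g_def h_def using assms by (intro f_nonneg) auto
  have g2: "g (Suc (Suc n)) = 7 * a * (1/2) ^ n" for n
  proof -
    have "(2::real) ^ n \<ge> 1" by simp
    hence "4 * a / 2 ^ Suc (Suc n) \<le> a" using assms by (simp add: divide_le_eq)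
    thus ?thesis unfolding g_def h_def f_tent_def by (simp add: power_divide)
  qed
  have g0: "g 0 = 4 * a" unfolding g_def h_def f_tent_def using assms by simp
  have g1: "g 1 = 6 * a" unfolding g_def h_def f_tent_def using assms by simp
  have "(\<lambda>n. 7 * a * (1/2::real) ^ n) sums (7 * a * (1 / (1 - 1/2)))"
    by (intro sums_mult geometric_sums) simp
  hence "(\<lambda>n. g (Suc (Suc n))) sums (14 * a)" unfolding g2 by simp
  hence "(\<lambda>n. g (Suc n)) sums (14 * a + g 1)" by (subst (asm) sums_Suc_iff) simp
  hence "g sums (14 * a + g 1 + g 0)" by (subst (asm) sums_Suc_iff)
  hence gs: "g sums (24 * a)" using g0 g1 by simp
  have hs: "(g has_sum (24 * a)) UNIV" by (rule sums_nonneg_imp_has_sum[OF gs gnn])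
  have "objective a (range h) = infsum ((\<lambda>x. ennreal (f_tent a x)) \<circ> h) UNIV"
    unfolding objective_def by (rule infsum_reindex[OF inj_on_subset[OF inj]]) simp
  also have "\<dots> = infsum (ennreal \<circ> g) UNIV" by (simp add: g_def comp_def)
  also have "\<dots> = (SUP F\<in>{F. finite F \<and> F\<subseteq>UNIV}. sum (ennreal \<circ> g) F)"
    by (rule nonneg_infsum_complete) simp
  also have "\<dots> = (SUP F\<in>{F. finite F \<and> F\<subseteq>UNIV}. ennreal (sum g F))"
    using gnn by (intro SUP_cong refl) (simp add: sum_ennreal comp_def)
  also have "\<dots> = ennreal (infsum g UNIV)"
    by (rule infsum_nonneg_is_SUPREMUM_ennreal[symmetric]) (use hs gnn in \<open>auto simp: summable_on_def\<close>)
  also have "\<dots> = ennreal (24 * a)" using hs infsumI by metis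
  finally have obj: "objective a (range h) = ennreal (24 * a)" .
  have "(SUP U \<in> {U. admissible a U}. objective a U) = ennreal (24 * a)"
  proof (rule antisym)
    show "(SUP U \<in> {U. admissible a U}. objective a U) \<le> ennreal (24 * a)"
      by (rule SUP_least) (use objective_le[OF assms] in auto)
    show "ennreal (24 * a) \<le> (SUP U \<in> {U. admissible a U}. objective a U)"
      using adm obj by (metis SUP_upper mem_Collect_eq)
  qed
  thus ?thesis using adm obj unfolding h_def by simp
qed

end
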